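(* Let $X\in\mathbb{R}^{n\times d}$ and let $f:\mathbb{R}^n\to(-\infty,\infty]$, $g:\mathbb{R}^d\to(-\infty,\infty]$ be proper lower semicontinuous convex functions such that there exists $\beta\in\mathrm{relint}(\mathrm{dom}(g))$ with $X\beta\in\mathrm{relint}(\mathrm{dom}(f))$, and such that $P(\beta):=f(X\beta)+g(\beta)$ attains its infimum over $\mathbb{R}^d$. Let $D(\theta):=-f^\star(-\theta)-g^\star(X^\top\theta)$, assume $f^\star$ is $L$-strongly convex for some $L\ge0$, and let $\hat\theta$ be a maximizer of $D$ over $\mathbb{R}^n$. Let $u:\mathbb{R}^n\to[-\infty,\infty]$ satisfy $D(\theta)\le u(\theta)$ for all $\theta\in\mathbb{R}^n$. Then for every $\tilde\theta\in\mathbb{R}^n$, \[ \hat\theta\in\mathcal{R}(\tilde\theta,u):=\{\theta\mid l(\theta;\tilde\theta)\le u(\theta)\},\qquad l(\theta;\tilde\theta)=\frac{L}{2}\|\theta-\tilde\theta\|_2^2+D(\tilde\theta). \]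
   Context: $h^\star(v)=\sup_z v^\top z-h(z)$ denotes the Fenchel conjugate; $\mathrm{dom}(h)=\{z:|h(z)|<\infty\}$; $\mathrm{relint}$ denotes relative interior. *)

theory Defs
  imports "HOL-Analysis.Analysis"
begin

definition edom :: "('a \<Rightarrow> ereal) \<Rightarrow> 'a set" where
  "edom h = {z. \<bar>h z\<bar> < \<infinity>}"

definition proper_fun :: "('a \<Rightarrow> ereal) \<Rightarrow> bool" where
  "proper_fun h \<longleftrightarrow> (\<forall>z. h z \<noteq> -\<infinity>) \<and> (\<exists>z. h z < \<infinity>)"

definition econvex :: "('a::real_vector \<Rightarrow> ereal) \<Rightarrow> bool" where
  "econvex h \<longleftrightarrow> convex {(z, r::real). h z \<le> ereal r}"

definition elsc :: "('a::topological_space \<Rightarrow> ereal) \<Rightarrow> bool" where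
  "elsc h \<longleftrightarrow> (\<forall>z. h z \<le> Liminf (at z) h)"

definition fconj :: "('a::real_inner \<Rightarrow> ereal) \<Rightarrow> 'a \<Rightarrow> ereal" where
  "fconj h v = (SUP z. ereal (v \<bullet> z) - h z)"

definition strongly_econvex :: "real \<Rightarrow> ('a::real_inner \<Rightarrow> ereal) \<Rightarrow> bool" where
  "strongly_econvex L h \<longleftrightarrow> econvex (\<lambda>z. h z - ereal (L / 2 * (norm z)\<^sup>2))"

end

theory Submission
  imports Defs
begin

lemma fconj_gt_minf:
  assumes "proper_fun h"
  shows "fconj h v > -\<infinity>"
proof -
  obtain z where z: "h z < \<infinity>" "h z \<noteq> -\<infinity>" using assms unfolding proper_fun_def by blast
  then obtain r where r: "h z = ereal r" by (cases "h z") auto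
  have "ereal (v \<bullet> z) - h z \<le> fconj h v" unfolding fconj_def by (rule SUP_upper) auto
  then show ?thesis using r by auto
qed

lemma econvex_ineq:
  assumes "econvex h" "h x = ereal r" "h y = ereal s2" "0 \<le> t" "t \<le> 1"
  shows "h ((1-t) *\<^sub>R x + t *\<^sub>R y) \<le> ereal ((1-t)*r + t * s2)"
proof -
  let ?S = "{(z, r::real). h z \<le> ereal r}"
  have "(x,r) \<in> ?S" "(y,s2) \<in> ?S" using assms by auto
  then have "(1-t) *\<^sub>R (x,r) + t *\<^sub>R (y,s2) \<in> ?S"
    using assms(1,4,5) unfolding econvex_def convex_def by (metis diff_add_cancel diff_ge_0_iff_ge)
  then show ?thesis by simp
qed

lemma fconj_convex_ineq:
  assumes "proper_fun h" "fconj h x = ereal r" "fconj h y = ereal s2" "0 \<le> t" "t \<le> 1"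
  shows "fconj h ((1-t) *\<^sub>R x + t *\<^sub>R y) \<le> ereal ((1-t)*r + t * s2)"
  unfolding fconj_def
proof (rule SUP_least)
  fix z
  show "ereal (((1-t) *\<^sub>R x + t *\<^sub>R y) \<bullet> z) - h z \<le> ereal ((1-t)*r + t * s2)"
  proof (cases "h z")
    case (real q)
    have "ereal (x \<bullet> z) - h z \<le> fconj h x" unfolding fconj_def by (rule SUP_upper) auto
    then have 1: "x \<bullet> z - q \<le> r" using real assms by auto
    have "ereal (y \<bullet> z) - h z \<le> fconj h y" unfolding fconj_def by (rule SUP_upper) auto
    then have 2: "y \<bullet> z - q \<le> s2" using real assms by auto
    have "((1-t) *\<^sub>R x + t *\<^sub>R y) \<bullet> z - q = (1-t)*(x \<bullet> z - q) + t*(y \<bullet> z - q)"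
      by (simp add: inner_add_left algebra_simps)
    also have "\<dots> \<le> (1-t)*r + t * s2"
      using 1 2 assms(4,5) by (intro add_mono mult_left_mono) auto
    finally show ?thesis using real by simp
  next
    case PInf then show ?thesis by simp
  next
    case MInf then show ?thesis using assms(1) unfolding proper_fun_def by auto
  qed
qed

lemma norm_identity:
  fixes a b :: "'a::real_inner"
  shows "(1-t)*(norm a)\<^sup>2 + t*(norm b)\<^sup>2 - (norm ((1-t) *\<^sub>R a + t *\<^sub>R b))\<^sup>2
     = t*(1-t)*(norm (a - b))\<^sup>2"
  unfolding power2_norm_eq_inner
  by (simp add: inner_add_left inner_add_right inner_diff_left
      inner_diff_right inner_commute algebra_simps)

theorem theorem4:
  fixes X :: "real^'d^'n"
    and f :: "real^'n \<Rightarrow> ereal" and g :: "real^'d \<Rightarrow> ereal"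
    and L :: real and \<theta>hat :: "real^'n" and u :: "real^'n \<Rightarrow> ereal"
  assumes f: "proper_fun f" "elsc f" "econvex f"
    and g: "proper_fun g" "elsc g" "econvex g"
    and qual: "\<exists>\<beta>. \<beta> \<in> rel_interior (edom g) \<and> X *v \<beta> \<in> rel_interior (edom f)"
    and attain: "\<exists>\<beta>0. \<forall>\<beta>. f (X *v \<beta>0) + g \<beta>0 \<le> f (X *v \<beta>) + g \<beta>"
    and L: "L \<ge> 0" "strongly_econvex L (fconj f)"
    and max: "\<forall>\<theta>. - fconj f (- \<theta>) - fconj g (transpose X *v \<theta>)
                   \<le> - fconj f (- \<theta>hat) - fconj g (transpose X *v \<theta>hat)"
    and ub: "\<forall>\<theta>. - fconj f (- \<theta>) - fconj g (transpose X *v \<theta>) \<le> u \<theta>"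
  shows "\<forall>\<theta>t. ereal (L / 2 * (norm (\<theta>hat - \<theta>t))\<^sup>2)
                + (- fconj f (- \<theta>t) - fconj g (transpose X *v \<theta>t)) \<le> u \<theta>hat"
proof
  fix b
  define a where "a = \<theta>hat"
  define XT where "XT = transpose X"
  define c where "c = L / 2 * (norm (a - b))\<^sup>2"
  have c0: "c \<ge> 0" using L unfolding c_def by simp
  have Da: "- fconj f (- a) - fconj g (XT *v a) \<le> u a" using ub unfolding a_def XT_def by blast
  have Dmax: "\<And>p. - fconj f (- p) - fconj g (XT *v p) \<le> - fconj f (- a) - fconj g (XT *v a)"
    using max unfolding a_def XT_def by blast
  have lbf: "\<And>v. fconj f v > -\<infinity>" using fconj_gt_minf[OF f(1)] by blast
  have lbg: "\<And>v. fconj g v > -\<infinity>" using fconj_gt_minf[OF g(1)] by blast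
  show "ereal (L / 2 * (norm (\<theta>hat - b))\<^sup>2) + (- fconj f (- b) - fconj g (transpose X *v b)) \<le> u \<theta>hat"
  proof (cases "fconj f (- b) = \<infinity> \<or> fconj g (XT *v b) = \<infinity>")
    case True
    then have "- fconj f (- b) - fconj g (XT *v b) = -\<infinity>" using lbf[of "-b"] lbg[of "XT *v b"]
      by (cases "fconj f (- b)"; cases "fconj g (XT *v b)") auto
    then show ?thesis unfolding XT_def by simp
  next
    case False
    then obtain fb gb where fb: "fconj f (- b) = ereal fb" and gb: "fconj g (XT *v b) = ereal gb"
      using lbf[of "-b"] lbg[of "XT *v b"] by (cases "fconj f (- b)"; cases "fconj g (XT *v b)") auto
    have "- fconj f (- b) - fconj g (XT *v b) \<le> - fconj f (- a) - fconj g (XT *v a)" by (rule Dmax)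
    then have "\<not> (fconj f (- a) = \<infinity> \<or> fconj g (XT *v a) = \<infinity>)"
      using fb gb lbf[of "-a"] lbg[of "XT *v a"]
      by (cases "fconj f (- a)"; cases "fconj g (XT *v a)") auto
    then obtain fa ga where fa: "fconj f (- a) = ereal fa" and ga: "fconj g (XT *v a) = ereal ga"
      using lbf[of "-a"] lbg[of "XT *v a"] by (cases "fconj f (- a)"; cases "fconj g (XT *v a)") auto
    define \<Delta> where "\<Delta> = (fb + gb) - (fa + ga)"
    have key: "c * (1 - t) \<le> \<Delta>" if t: "0 < t" "t < 1" for t
    proof -
      define p where "p = (1-t) *\<^sub>R a + t *\<^sub>R b"
      let ?k = "\<lambda>z. fconj f z - ereal (L / 2 * (norm z)\<^sup>2)"
      have ka: "?k (- a) = ereal (fa - L/2*(norm a)\<^sup>2)" using fa by simp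
      have kb: "?k (- b) = ereal (fb - L/2*(norm b)\<^sup>2)" using fb by simp
      have mp: "- p = (1-t) *\<^sub>R (- a) + t *\<^sub>R (- b)" unfolding p_def by simp
      have "?k (- p) \<le> ereal ((1-t)*(fa - L/2*(norm a)\<^sup>2) + t*(fb - L/2*(norm b)\<^sup>2))"
        unfolding mp using econvex_ineq[OF L(2)[unfolded strongly_econvex_def] ka kb] t by simp
      moreover obtain q1 where q1: "fconj f (- p) = ereal q1"
        using calculation lbf[of "-p"] by (cases "fconj f (- p)") auto
      ultimately have h1: "q1 - L/2*(norm p)\<^sup>2 \<le> (1-t)*(fa - L/2*(norm a)\<^sup>2) + t*(fb - L/2*(norm b)\<^sup>2)"
        by simp
      have xp: "XT *v p = (1-t) *\<^sub>R (XT *v a) + t *\<^sub>R (XT *v b)"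
        unfolding p_def by (simp add: matrix_vector_right_distrib matrix_vector_mult_scaleR)
      have "fconj g (XT *v p) \<le> ereal ((1-t)*ga + t*gb)"
        unfolding xp using fconj_convex_ineq[OF g(1) ga gb] t by simp
      moreover obtain q2 where q2: "fconj g (XT *v p) = ereal q2"
        using calculation lbg[of "XT *v p"] by (cases "fconj g (XT *v p)") auto
      ultimately have h2: "q2 \<le> (1-t)*ga + t*gb" by simp
      have "- fconj f (- p) - fconj g (XT *v p) \<le> - fconj f (- a) - fconj g (XT *v a)" by (rule Dmax)
      then have h3: "fa + ga \<le> q1 + q2" using q1 q2 fa ga by simp
      have nid: "(1-t)*(norm a)\<^sup>2 + t*(norm b)\<^sup>2 - (norm p)\<^sup>2 = t*(1-t)*(norm (a - b))\<^sup>2"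
        unfolding p_def by (rule norm_identity)
      have np: "(norm p)\<^sup>2 = (1-t)*(norm a)\<^sup>2 + t*(norm b)\<^sup>2 - t*(1-t)*(norm (a - b))\<^sup>2"
        using nid by linarith
      have h1': "q1 \<le> (1-t)*fa + t*fb - t*(1-t)*c"
      proof -
        have "q1 \<le> (1-t)*(fa - L/2*(norm a)\<^sup>2) + t*(fb - L/2*(norm b)\<^sup>2) + L/2*(norm p)\<^sup>2"
          using h1 by linarith
        also have "\<dots> = (1-t)*fa + t*fb - t*(1-t)*c"
          unfolding np c_def by (simp add: field_simps)
        finally show ?thesis .
      qed
      have "t * (fa + ga) + t * c * (1 - t) \<le> t * (fb + gb)"
        using h1' h2 h3 by (simp add: algebra_simps)
      then have "t * (c * (1 - t)) \<le> t * \<Delta>" unfolding \<Delta>_def by (simp add: algebra_simps)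
      then show ?thesis using t by simp
    qed
    have "c \<le> \<Delta>"
    proof (rule ccontr)
      assume "\<not> c \<le> \<Delta>"
      then have lt: "\<Delta> < c" by simp
      define t where "t = (c - \<Delta>) / (2*c)"
      have cpos: "c > 0" using lt c0 key[of "1/2"] by simp
      have "0 < t" "t < 1" using lt cpos c0 key[of "1/2"] unfolding t_def by (auto simp: field_simps)
      then have "c * (1 - t) \<le> \<Delta>" by (rule key)
      moreover have "c * (1 - t) = (c + \<Delta>) / 2" unfolding t_def using cpos by (simp add: field_simps)
      ultimately show False using lt by simp
    qed
    then have "ereal c + (- fconj f (- b) - fconj g (XT *v b)) \<le> - fconj f (- a) - fconj g (XT *v a)"
      using fa ga fb gb unfolding \<Delta>_def by simp
    also have "\<dots> \<le> u a" by (rule Da)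
    finally show ?thesis unfolding a_def XT_def c_def .
  qed
qed

end
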